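(* Let $X_1,\dots,X_n$ be i.i.d. real random variables whose common distribution is symmetric about an unknown $\mu\in\mathbb{R}$. Fix integers $k\le n$ and $1\le r\le m$, let $R(\theta)$ be the one-sided resampled median-of-means rank defined in the context (with the same random signs and permutation used for all $\theta$), and let $\Theta_n=\{\theta\in\mathbb{R}: R(\theta)\le m-r\}$. Then $$\mathbb{P}(\mu\in\Theta_n)=1-\frac{r}{m}.$$
   Context: Blocks: for $\ell=1,\dots,k$ let $B_\ell=\{i\in[n]: i\equiv \ell \pmod k\}$. Median: for reals $y_1,\dots,y_k$ with order statistics $y_{(1)}\le\dots\le y_{(k)}$, $\mathrm{med}(y_1,\dots,y_k)=y_{(k/2)}$ if $k$ is even and $y_{(\lfloor k/2\rfloor+1)}$ if $k$ is odd. Median-of-means: $\widehat\mu(x_1,\dots,x_n)=\mathrm{med}\big(\frac{1}{|B_1|}\sum_{i\in B_1}x_i,\dots,\frac{1}{|B_k|}\sum_{i\in B_k}x_i\big)$. Randomization: $\{\alpha_{i,j}\}_{i\in[n],j\in[m-1]}$ i.i.d. Rademacher signs independent of the data; $\pi$ a uniformly random permutation of $\{0,\dots,m-1\}$ independent of data and signs. For $\theta\in\mathbb{R}$: $\mathcal{D}_0(\theta)=(X_1,\dots,X_n)$, $\mathcal{D}_j(\theta)=(\alpha_{1,j}(X_1-\theta)+\theta,\dots,\alpha_{n,j}(X_n-\theta)+\theta)$ for $j\in[m-1]$; $S_j(\theta)=\widehat\mu(\mathcal{D}_j(\theta))-\theta$ for $j=0,\dots,m-1$. $S_j(\theta)\prec_\pi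 S_l(\theta)$ iff $S_j(\theta)<S_l(\theta)$, or $S_j(\theta)=S_l(\theta)$ and $\pi(j)<\pi(l)$. $R(\theta)=1+\sum_{j=1}^{m-1}\mathbb{I}\big(S_0(\theta)\prec_\pi S_j(\theta)\big)$. *)

theory Defs
  imports "HOL-Probability.Probability" "HOL-Combinatorics.Permutations"
begin

definition block :: "nat \<Rightarrow> nat \<Rightarrow> nat \<Rightarrow> nat set" where
  "block n k l = {i \<in> {1..n}. i mod k = l mod k}"

text \<open>Median of y_1..y_k: order statistic y_(k/2) if k even, y_(floor(k/2)+1) if k odd
  (1-indexed order statistics; the list below is 0-indexed).\<close>
definition med :: "nat \<Rightarrow> (nat \<Rightarrow> real) \<Rightarrow> real" where
  "med k y = (let ys = sort (map y [1..<k+1]) in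
      if even k then ys ! (k div 2 - 1) else ys ! (k div 2))"

definition mom :: "nat \<Rightarrow> nat \<Rightarrow> (nat \<Rightarrow> real) \<Rightarrow> real" where
  "mom n k x = med k (\<lambda>l. (\<Sum>i\<in>block n k l. x i) / real (card (block n k l)))"

definition Dset :: "(nat \<Rightarrow> real) \<Rightarrow> (nat \<Rightarrow> nat \<Rightarrow> real) \<Rightarrow> real \<Rightarrow> nat \<Rightarrow> nat \<Rightarrow> real" where
  "Dset x a \<theta> j = (if j = 0 then x else (\<lambda>i. a i j * (x i - \<theta>) + \<theta>))"

definition Sstat :: "nat \<Rightarrow> nat \<Rightarrow> (nat \<Rightarrow> real) \<Rightarrow> (nat \<Rightarrow> nat \<Rightarrow> real) \<Rightarrow> real \<Rightarrow> nat \<Rightarrow> real" where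
  "Sstat n k x a \<theta> j = mom n k (Dset x a \<theta> j) - \<theta>"

definition prec_pi :: "(nat \<Rightarrow> nat) \<Rightarrow> (nat \<Rightarrow> real) \<Rightarrow> nat \<Rightarrow> nat \<Rightarrow> bool" where
  "prec_pi p S j l = (S j < S l \<or> (S j = S l \<and> p j < p l))"

definition rank_R :: "nat \<Rightarrow> nat \<Rightarrow> nat \<Rightarrow> (nat \<Rightarrow> real) \<Rightarrow> (nat \<Rightarrow> nat \<Rightarrow> real)
    \<Rightarrow> (nat \<Rightarrow> nat) \<Rightarrow> real \<Rightarrow> nat" where
  "rank_R n k m x a p \<theta> = 1 + card {j \<in> {1..<m}. prec_pi p (Sstat n k x a \<theta>) 0 j}"

definition conf_set :: "nat \<Rightarrow> nat \<Rightarrow> nat \<Rightarrow> nat \<Rightarrow> (nat \<Rightarrow> real) \<Rightarrow> (nat \<Rightarrow> nat \<Rightarrow> real)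
    \<Rightarrow> (nat \<Rightarrow> nat) \<Rightarrow> real set" where
  "conf_set n k m r x a p = {\<theta>. rank_R n k m x a p \<theta> \<le> m - r}"

end

theory Submission
  imports Defs
begin


definition rk :: "nat \<Rightarrow> (nat \<Rightarrow> nat) \<Rightarrow> (nat \<Rightarrow> real) \<Rightarrow> nat \<Rightarrow> nat" where
  "rk m p S j = 1 + card {l \<in> {..<m}. prec_pi p S j l}"

lemma prec_irrefl: "\<not> prec_pi p S j j" by (simp add: prec_pi_def)
lemma prec_trans: "prec_pi p S a b \<Longrightarrow> prec_pi p S b c \<Longrightarrow> prec_pi p S a c"
  unfolding prec_pi_def by auto
lemma prec_total: "inj_on p A \<Longrightarrow> a \<in> A \<Longrightarrow> b \<in> A \<Longrightarrow> a \<noteq> b \<Longrightarrow> prec_pi p S a b \<or> prec_pi p S b a"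
  unfolding prec_pi_def inj_on_def by (metis linorder_neqE_linordered_idom linorder_neqE_nat)

lemma rk_strict:
  assumes "prec_pi p S j l" "j < m" "l < m"
  shows "rk m p S l < rk m p S j"
proof -
  have "{l' \<in> {..<m}. prec_pi p S l l'} \<subset> {l' \<in> {..<m}. prec_pi p S j l'}"
    using assms prec_trans prec_irrefl by blast
  then have "card {l' \<in> {..<m}. prec_pi p S l l'} < card {l' \<in> {..<m}. prec_pi p S j l'}"
    by (intro psubset_card_mono) auto
  then show ?thesis unfolding rk_def by simp
qed

lemma rk_bij:
  assumes "p permutes {..<m}"
  shows "bij_betw (rk m p S) {..<m} {1..m}"
proof -
  have inj: "inj_on p {..<m}" using assms permutes_inj_on by blast
  have i: "inj_on (rk m p S) {..<m}"
  proof (rule inj_onI)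
    fix j l assume "j \<in> {..<m}" "l \<in> {..<m}" "rk m p S j = rk m p S l"
    then show "j = l" using prec_total[OF inj] rk_strict by (metis less_irrefl lessThan_iff)
  qed
  moreover have s: "rk m p S ` {..<m} \<subseteq> {1..m}"
  proof
    fix v assume "v \<in> rk m p S ` {..<m}"
    then obtain j where j: "j < m" "v = rk m p S j" by auto
    have "{l \<in> {..<m}. prec_pi p S j l} \<subseteq> {..<m} - {j}" using prec_irrefl by auto
    then have "card {l \<in> {..<m}. prec_pi p S j l} \<le> card ({..<m} - {j})"
      by (intro card_mono) auto
    then have "card {l \<in> {..<m}. prec_pi p S j l} \<le> m - 1" using j by simp
    then show "v \<in> {1..m}" using j unfolding rk_def by auto
  qed
  moreover have "card (rk m p S ` {..<m}) = card {1..m}"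
    using card_image[OF i] by simp
  ultimately have "rk m p S ` {..<m} = {1..m}"
    by (intro card_subset_eq) auto
  with i show ?thesis by (simp add: bij_betw_def)
qed

lemma rk_count:
  assumes "p permutes {..<m}" "r \<le> m"
  shows "card {j \<in> {..<m}. rk m p S j \<le> m - r} = m - r"
proof -
  have b: "bij_betw (rk m p S) {..<m} {1..m}" by (rule rk_bij[OF assms(1)])
  have "rk m p S ` {j \<in> {..<m}. rk m p S j \<le> m - r} = {1..m-r}"
  proof
    show "rk m p S ` {j \<in> {..<m}. rk m p S j \<le> m - r} \<subseteq> {1..m-r}"
      using b unfolding bij_betw_def by auto
    show "{1..m-r} \<subseteq> rk m p S ` {j \<in> {..<m}. rk m p S j \<le> m - r}"
    proof
      fix v assume v: "v \<in> {1..m-r}"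
      then have "v \<in> rk m p S ` {..<m}" using b unfolding bij_betw_def by auto
      then show "v \<in> rk m p S ` {j \<in> {..<m}. rk m p S j \<le> m - r}" using v by auto
    qed
  qed
  moreover have "inj_on (rk m p S) {j \<in> {..<m}. rk m p S j \<le> m - r}"
    using b unfolding bij_betw_def by (auto intro: inj_on_subset)
  ultimately show ?thesis by (metis card_image card_atLeastAtMost diff_Suc_1)
qed

lemma mom_cong: "(\<And>i. i \<in> {1..n} \<Longrightarrow> x i = x' i) \<Longrightarrow> mom n k x = mom n k x'"
  unfolding mom_def block_def by (intro arg_cong[where f="med k"] ext arg_cong2[where f="(/)"] sum.cong) auto

definition Vf :: "nat \<Rightarrow> nat \<Rightarrow> real \<Rightarrow> (nat \<Rightarrow> real) \<Rightarrow> (nat \<times> nat \<Rightarrow> real) \<Rightarrow> nat \<Rightarrow> real" where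
  "Vf n k \<mu> y c j = mom n k (\<lambda>i. \<mu> + c (i, j) * (y i - \<mu>)) - \<mu>"

definition swc :: "nat \<Rightarrow> nat \<Rightarrow> nat \<Rightarrow> (nat \<times> nat \<Rightarrow> real) \<Rightarrow> (nat \<times> nat \<Rightarrow> real)" where
  "swc n m j c = restrict (\<lambda>(i, l). c (i, Transposition.transpose 0 j l)) ({1..n} \<times> {..<m})"

lemma transpose_lt: "(l::nat) < m \<Longrightarrow> j < m \<Longrightarrow> Transposition.transpose 0 j l < m"
  by (auto simp: Transposition.transpose_def)

lemma V_swap: "l < m \<Longrightarrow> j < m \<Longrightarrow> Vf n k \<mu> y (swc n m j c) l = Vf n k \<mu> y c (Transposition.transpose 0 j l)"
  unfolding Vf_def swc_def by (intro arg_cong2[where f="(-)"] mom_cong) auto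

lemma rk_swap:
  assumes "j < m"
  shows "rk m (p \<circ> Transposition.transpose 0 j) (Vf n k \<mu> y (swc n m j c)) 0 = rk m p (Vf n k \<mu> y c) j"
proof -
  let ?t = "Transposition.transpose 0 j"
  let ?Q = "\<lambda>l. prec_pi p (Vf n k \<mu> y c) j l"
  have m: "0 < m" using assms by simp
  have "{l \<in> {..<m}. prec_pi (p \<circ> ?t) (Vf n k \<mu> y (swc n m j c)) 0 l} = {l \<in> {..<m}. ?Q (?t l)}"
    using V_swap[OF m assms] V_swap[OF _ assms] unfolding prec_pi_def by auto
  also have "\<dots> = ?t ` {l \<in> {..<m}. ?Q l}"
  proof
    show "{l \<in> {..<m}. ?Q (?t l)} \<subseteq> ?t ` {l \<in> {..<m}. ?Q l}"
    proof
      fix l assume "l \<in> {l \<in> {..<m}. ?Q (?t l)}"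
      then have "?t l \<in> {l \<in> {..<m}. ?Q l}" using transpose_lt assms by auto
      then show "l \<in> ?t ` {l \<in> {..<m}. ?Q l}" by (metis image_eqI transpose_involutory)
    qed
    show "?t ` {l \<in> {..<m}. ?Q l} \<subseteq> {l \<in> {..<m}. ?Q (?t l)}"
      using transpose_lt assms by auto
  qed
  finally have e: "{l \<in> {..<m}. prec_pi (p \<circ> ?t) (Vf n k \<mu> y (swc n m j c)) 0 l} = ?t ` {l \<in> {..<m}. ?Q l}" .
  have "inj ?t" by (metis injI transpose_involutory)
  then show ?thesis unfolding rk_def e by (simp add: card_image inj_on_subset)
qed


definition SC :: "nat \<Rightarrow> nat \<Rightarrow> (nat \<times> nat \<Rightarrow> real) set" where
  "SC n m = PiE ({1..n} \<times> {..<m}) (\<lambda>_. {-1, 1})"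

lemma swc_SC: "c \<in> SC n m \<Longrightarrow> j < m \<Longrightarrow> swc n m j c \<in> SC n m"
  unfolding SC_def swc_def using transpose_lt by (auto simp: PiE_iff)

lemma swc_swc: "c \<in> SC n m \<Longrightarrow> j < m \<Longrightarrow> swc n m j (swc n m j c) = c"
  unfolding SC_def
  by (rule PiE_ext[of _ "{1..n} \<times> {..<m}" "\<lambda>_. {-1, 1}"])
     (use transpose_lt in \<open>auto simp: swc_def PiE_iff\<close>)

lemma sum_if_card: "finite A \<Longrightarrow> (\<Sum>j\<in>A. if P j then 1 else 0 :: real) = real (card {j \<in> A. P j})"
  by (simp add: sum.If_cases Int_def conj_commute)

lemma count_main:
  assumes "r \<le> m" "1 \<le> m"
  shows "real m * (\<Sum>x\<in>SC n m \<times> {p. p permutes {..<m}}.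
            if rk m (snd x) (Vf n k \<mu> y (fst x)) 0 \<le> m - r then 1 else 0)
         = real (m - r) * real (card (SC n m)) * real (fact m)"
proof -
  let ?A = "SC n m \<times> {p. p permutes {..<m}}"
  let ?f = "\<lambda>j x. if rk m (snd x) (Vf n k \<mu> y (fst x)) j \<le> m - r then 1 else (0::real)"
  have finA: "finite ?A" unfolding SC_def by (intro finite_cartesian_product finite_PiE finite_permutations) auto
  have eq: "sum (?f 0) ?A = sum (?f j) ?A" if j: "j < m" for j
  proof -
    let ?h = "\<lambda>x. (swc n m j (fst x), snd x \<circ> Transposition.transpose 0 j)"
    have "bij_betw ?h ?A ?A"
    proof (rule bij_betw_byWitness[where f'="?h"])
      show "\<forall>a\<in>?A. ?h (?h a) = a" "\<forall>a\<in>?A. ?h (?h a) = a" using j by (auto simp: swc_swc comp_assoc)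
      show "?h ` ?A \<subseteq> ?A" "?h ` ?A \<subseteq> ?A" using swc_SC j
        by (auto intro!: permutes_compose permutes_swap_id)
    qed
    then have "sum (\<lambda>x. ?f 0 (?h x)) ?A = sum (?f 0) ?A" by (rule sum.reindex_bij_betw)
    then have "sum (?f 0) ?A = sum (\<lambda>x. ?f 0 (?h x)) ?A" by simp
    also have "\<dots> = sum (?f j) ?A" using rk_swap[OF j] by simp
    finally show ?thesis .
  qed
  have "real m * sum (?f 0) ?A = (\<Sum>j<m. sum (?f 0) ?A)" by simp
  also have "\<dots> = (\<Sum>j<m. sum (?f j) ?A)" using eq by simp
  also have "\<dots> = (\<Sum>x\<in>?A. \<Sum>j<m. ?f j x)" by (rule sum.swap)
  also have "\<dots> = (\<Sum>x\<in>?A. real (m - r))"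
  proof (rule sum.cong[OF refl])
    fix x assume "x \<in> ?A"
    then have "snd x permutes {..<m}" by auto
    then show "(\<Sum>j<m. ?f j x) = real (m - r)"
      using rk_count[OF _ assms(1)] by (simp add: sum_if_card)
  qed
  also have "\<dots> = real (m - r) * real (card (SC n m)) * real (fact m)"
    by (simp add: card_cartesian_product card_permutations)
  finally show ?thesis by simp
qed


definition SN :: "nat \<Rightarrow> (nat \<Rightarrow> real) set" where
  "SN n = PiE {1..n} (\<lambda>_. {-1, 1})"
definition SG :: "nat \<Rightarrow> nat \<Rightarrow> (nat \<times> nat \<Rightarrow> real) set" where
  "SG n m = PiE ({1..n} \<times> {1..<m}) (\<lambda>_. {-1, 1})"
definition bmap :: "nat \<Rightarrow> nat \<Rightarrow> (nat \<Rightarrow> real) \<Rightarrow> (nat \<times> nat \<Rightarrow> real) \<Rightarrow> (nat \<times> nat \<Rightarrow> real)" where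
  "bmap n m s a = restrict (\<lambda>(i, j). if j = 0 then s i else s i * a (i, j)) ({1..n} \<times> {..<m})"
definition binv :: "nat \<Rightarrow> nat \<Rightarrow> (nat \<times> nat \<Rightarrow> real) \<Rightarrow> (nat \<Rightarrow> real) \<times> (nat \<times> nat \<Rightarrow> real)" where
  "binv n m c = (restrict (\<lambda>i. c (i, 0)) {1..n}, restrict (\<lambda>(i, j). c (i, 0) * c (i, j)) ({1..n} \<times> {1..<m}))"
definition fl :: "nat \<Rightarrow> real \<Rightarrow> (nat \<Rightarrow> real) \<Rightarrow> (nat \<Rightarrow> real) \<Rightarrow> (nat \<Rightarrow> real)" where
  "fl n \<mu> s y = restrict (\<lambda>i. \<mu> + s i * (y i - \<mu>)) {1..n}"

lemma sign_sq: "(x::real) \<in> {-1, 1} \<Longrightarrow> x * x = 1" by auto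
lemma sign_mult: "(x::real) \<in> {-1, 1} \<Longrightarrow> y \<in> {-1, 1} \<Longrightarrow> x * y \<in> {-1, 1}" by auto

lemma bmap_bij: assumes m1: "1 \<le> m" shows "bij_betw (\<lambda>x. bmap n m (fst x) (snd x)) (SN n \<times> SG n m) (SC n m)"
proof (rule bij_betw_byWitness[where f'="binv n m"])
  show "\<forall>a\<in>SN n \<times> SG n m. binv n m (bmap n m (fst a) (snd a)) = a"
  proof
    fix x assume x: "x \<in> SN n \<times> SG n m"
    obtain s a where sa: "x = (s, a)" by (cases x)
    have s: "s \<in> SN n" and a: "a \<in> SG n m" using x sa by auto
    have ss: "\<And>i. i \<in> {1..n} \<Longrightarrow> s i * s i = 1" using s unfolding SN_def by (intro sign_sq) (auto simp: PiE_iff)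
    have 1: "restrict (\<lambda>i. bmap n m s a (i, 0)) {1..n} = s"
      using s m1 unfolding SN_def
      by (intro PiE_ext[of _ "{1..n}" "\<lambda>_. {-1,1}"]) (auto simp: bmap_def PiE_iff)
    have 2: "restrict (\<lambda>(i, j). bmap n m s a (i, 0) * bmap n m s a (i, j)) ({1..n} \<times> {1..<m}) = a"
    proof (rule PiE_ext[of _ "{1..n} \<times> {1..<m}" "\<lambda>_. {-1,1}"])
      show "a \<in> ({1..n} \<times> {1..<m}) \<rightarrow>\<^sub>E {-1, 1}" using a unfolding SG_def by auto
      fix ij assume ij: "ij \<in> {1..n} \<times> {1..<m}"
      then have "s (fst ij) \<in> {-1,1}" using s unfolding SN_def by auto
      then show "restrict (\<lambda>(i, j). bmap n m s a (i, 0) * bmap n m s a (i, j)) ({1..n} \<times> {1..<m}) ij = a ij"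
        using ij by (auto simp: bmap_def)
    next
      show "restrict (\<lambda>(i, j). bmap n m s a (i, 0) * bmap n m s a (i, j)) ({1..n} \<times> {1..<m}) \<in> ({1..n} \<times> {1..<m}) \<rightarrow>\<^sub>E {-1, 1}"
        using s a ss unfolding SN_def SG_def by (auto simp: bmap_def PiE_iff mult.assoc[symmetric])
    qed
    show "binv n m (bmap n m (fst x) (snd x)) = x" using 1 2 sa by (simp add: binv_def)
  qed
  show "\<forall>c\<in>SC n m. bmap n m (fst (binv n m c)) (snd (binv n m c)) = c"
  proof
    fix c assume c: "c \<in> SC n m"
    have cc: "\<And>i. i \<in> {1..n} \<Longrightarrow> c (i, 0) * c (i, 0) = 1"
      using c m1 unfolding SC_def by (intro sign_sq) (auto simp: PiE_iff)
    show "bmap n m (fst (binv n m c)) (snd (binv n m c)) = c"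
    proof (rule PiE_ext[of _ "{1..n} \<times> {..<m}" "\<lambda>_. {-1,1}"])
      show "c \<in> ({1..n} \<times> {..<m}) \<rightarrow>\<^sub>E {-1, 1}" using c unfolding SC_def by auto
      show "bmap n m (fst (binv n m c)) (snd (binv n m c)) \<in> ({1..n} \<times> {..<m}) \<rightarrow>\<^sub>E {-1, 1}"
        using c cc unfolding SC_def by (auto simp: bmap_def binv_def PiE_iff mult.assoc[symmetric])
      fix ij assume ij: "ij \<in> {1..n} \<times> {..<m}"
      then have "c (fst ij, 0) * c (fst ij, 0) = 1" by (intro cc) (auto simp: mem_Times_iff)
      then show "bmap n m (fst (binv n m c)) (snd (binv n m c)) ij = c ij"
        using ij by (auto simp: bmap_def binv_def mult.assoc[symmetric])
    qed
  qed
  show "(\<lambda>x. bmap n m (fst x) (snd x)) ` (SN n \<times> SG n m) \<subseteq> SC n m"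
  proof
    fix c assume "c \<in> (\<lambda>x. bmap n m (fst x) (snd x)) ` (SN n \<times> SG n m)"
    then obtain s a where s: "s \<in> SN n" and a: "a \<in> SG n m" and c: "c = bmap n m s a" by auto
    have "(case ij of (i, j) \<Rightarrow> if j = 0 then s i else s i * a (i, j)) \<in> {-1, 1}"
      if ij: "ij \<in> {1..n} \<times> {..<m}" for ij
    proof -
      obtain i j where ij': "ij = (i, j)" by (cases ij)
      have "s i \<in> {-1, 1}" using s ij ij' unfolding SN_def by auto
      moreover have "j \<noteq> 0 \<Longrightarrow> a (i, j) \<in> {-1, 1}" using a ij ij' unfolding SG_def by auto
      ultimately show ?thesis using ij' by (auto simp: sign_mult)
    qed
    then show "c \<in> SC n m" unfolding c SC_def bmap_def by (simp add: restrict_PiE_iff)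
  qed
  show "binv n m ` SC n m \<subseteq> SN n \<times> SG n m"
  proof
    fix x assume "x \<in> binv n m ` SC n m"
    then obtain c where c: "c \<in> SC n m" and x: "x = binv n m c" by auto
    have c1: "c (i, j) \<in> {-1, 1}" if "i \<in> {1..n}" "j < m" for i j
      using c that unfolding SC_def by auto
    have f1: "fst x \<in> SN n" unfolding x binv_def SN_def using c1 m1 by (simp add: restrict_PiE_iff)
    have c2: "c (i, 0) * c (i, j) \<in> {-1, 1}" if "i \<in> {1..n}" "j < m" for i j
      using sign_mult[OF c1 c1] that m1 by auto
    have f2: "snd x \<in> SG n m" unfolding x binv_def SG_def snd_conv restrict_PiE_iff
    proof
      fix ij assume "ij \<in> {1..n} \<times> {1..<m}"
      then show "(case ij of (i, j) \<Rightarrow> c (i, 0) * c (i, j)) \<in> {-1, 1}"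
        by (cases ij) (simp del: insert_iff add: c2)
    qed
    show "x \<in> SN n \<times> SG n m" using f1 f2 by (cases x) auto
  qed
qed

lemma rank_link:
  "rank_R n k m (fl n \<mu> s y) (\<lambda>i j. a (i, j)) p \<mu> = rk m p (Vf n k \<mu> y (bmap n m s a)) 0"
proof -
  let ?S = "Sstat n k (fl n \<mu> s y) (\<lambda>i j. a (i, j)) \<mu>"
  let ?V = "Vf n k \<mu> y (bmap n m s a)"
  have SV: "?S j = ?V j" if "j < m" for j
  proof (cases "j = 0")
    case True
    then show ?thesis unfolding Sstat_def Vf_def Dset_def
      using that by (intro arg_cong2[where f="(-)"] mom_cong) (auto simp: fl_def bmap_def)
  next
    case False
    then show ?thesis unfolding Sstat_def Vf_def Dset_def
      using that by (intro arg_cong2[where f="(-)"] mom_cong) (auto simp: fl_def bmap_def algebra_simps)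
  qed
  have "{j \<in> {1..<m}. prec_pi p ?S 0 j} = {l \<in> {..<m}. prec_pi p ?V 0 l}"
  proof -
    have "prec_pi p ?S 0 j = prec_pi p ?V 0 j" if "j < m" for j
      using SV[OF that] SV[of 0] that unfolding prec_pi_def by auto
    then show ?thesis using prec_irrefl[of p ?V 0] by (auto simp: Suc_le_eq) (metis gr0I)
  qed
  then show ?thesis unfolding rank_R_def rk_def by simp
qed

lemma card_SC: "card (SC n m) = 2 ^ (n * m)"
  unfolding SC_def by (simp add: card_PiE card_cartesian_product numeral_2_eq_2)

lemma finite_SN: "finite (SN n)" unfolding SN_def by (intro finite_PiE) auto
lemma finite_SG: "finite (SG n m)" unfolding SG_def by (intro finite_PiE) auto

lemma count_total:
  assumes "r \<le> m" "1 \<le> m"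
  shows "real m * (\<Sum>s\<in>SN n. \<Sum>a\<in>SG n m. \<Sum>p\<in>{p. p permutes {..<m}}.
            if rank_R n k m (fl n \<mu> s y) (\<lambda>i j. a (i, j)) p \<mu> \<le> m - r then 1 else 0)
         = real (m - r) * 2 ^ (n * m) * real (fact m)"
proof -
  let ?P = "{p. p permutes {..<m}}"
  let ?F = "\<lambda>c. \<Sum>p\<in>?P. if rk m p (Vf n k \<mu> y c) 0 \<le> m - r then 1 else (0::real)"
  have "(\<Sum>s\<in>SN n. \<Sum>a\<in>SG n m. \<Sum>p\<in>?P.
            if rank_R n k m (fl n \<mu> s y) (\<lambda>i j. a (i, j)) p \<mu> \<le> m - r then 1 else (0::real))
        = (\<Sum>s\<in>SN n. \<Sum>a\<in>SG n m. ?F (bmap n m s a))"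
    by (simp add: rank_link)
  also have "\<dots> = (\<Sum>x\<in>SN n \<times> SG n m. ?F (bmap n m (fst x) (snd x)))"
    using sum.cartesian_product[of "\<lambda>s a. ?F (bmap n m s a)" "SG n m" "SN n"] by (simp only: split_def)
  also have "\<dots> = (\<Sum>c\<in>SC n m. ?F c)"
    by (rule sum.reindex_bij_betw[OF bmap_bij[OF assms(2)]])
  also have "\<dots> = (\<Sum>x\<in>SC n m \<times> ?P. if rk m (snd x) (Vf n k \<mu> y (fst x)) 0 \<le> m - r then 1 else 0)"
    by (simp only: sum.cartesian_product' fst_conv snd_conv)
  finally show ?thesis using count_main[OF assms, of n k \<mu> y] card_SC by simp
qed



lemma length_filter_sort: "length (filter P (sort xs)) = length (filter P xs)"
proof -
  have "mset (filter P (sort xs)) = mset (filter P xs)" by (simp add: mset_filter)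
  then show ?thesis by (metis size_mset)
qed

lemma sort_nth_le_iff:
  fixes xs :: "real list"
  assumes i: "i < length xs"
  shows "sort xs ! i \<le> t \<longleftrightarrow> i < length (filter (\<lambda>x. x \<le> t) xs)"
proof -
  let ?ys = "sort xs"
  have s: "sorted ?ys" by simp
  have len: "length ?ys = length xs" by simp
  have c: "length (filter (\<lambda>x. x \<le> t) xs) = card {j. j < length ?ys \<and> ?ys ! j \<le> t}"
    using length_filter_sort[of "\<lambda>x. x \<le> t" xs] length_filter_conv_card[of "\<lambda>x. x \<le> t" ?ys] by simp
  show ?thesis
  proof
    assume le: "?ys ! i \<le> t"
    have "{..i} \<subseteq> {j. j < length ?ys \<and> ?ys ! j \<le> t}"
    proof
      fix j assume "j \<in> {..i}"
      then have "j \<le> i" by simp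
      then have "?ys ! j \<le> ?ys ! i" using sorted_nth_mono[OF s] i len by simp
      then show "j \<in> {j. j < length ?ys \<and> ?ys ! j \<le> t}" using le \<open>j \<le> i\<close> i len by simp
    qed
    then have "card {..i} \<le> card {j. j < length ?ys \<and> ?ys ! j \<le> t}" by (intro card_mono) auto
    then show "i < length (filter (\<lambda>x. x \<le> t) xs)" using c by simp
  next
    assume lt: "i < length (filter (\<lambda>x. x \<le> t) xs)"
    show "?ys ! i \<le> t"
    proof (rule ccontr)
      assume "\<not> ?ys ! i \<le> t"
      then have "{j. j < length ?ys \<and> ?ys ! j \<le> t} \<subseteq> {..<i}"
      proof (intro subsetI)
        fix j assume "\<not> ?ys ! i \<le> t" "j \<in> {j. j < length ?ys \<and> ?ys ! j \<le> t}"
        then have "j < length ?ys" "?ys ! j \<le> t" "t < ?ys ! i" by auto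
        show "j \<in> {..<i}"
        proof (rule ccontr)
          assume "j \<notin> {..<i}"
          then have "i \<le> j" by simp
          then have "?ys ! i \<le> ?ys ! j" using sorted_nth_mono[OF s] \<open>j < length ?ys\<close> by blast
          then show False using \<open>?ys ! j \<le> t\<close> \<open>t < ?ys ! i\<close> by simp
        qed
      qed
      then have "card {j. j < length ?ys \<and> ?ys ! j \<le> t} \<le> i"
        using card_mono[OF finite_lessThan] by fastforce
      then show False using lt c by simp
    qed
  qed
qed

lemma length_filter_sum: "real (length (filter P xs)) = (\<Sum>x\<leftarrow>xs. if P x then 1 else 0)"
  by (induction xs) auto

lemma med_measurable:
  assumes k: "1 \<le> k" and f: "\<And>l. l \<in> {1..k} \<Longrightarrow> f l \<in> borel_measurable M"
  shows "(\<lambda>w. med k (\<lambda>l. f l w)) \<in> borel_measurable M"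
proof -
  define idx where "idx = (if even k then k div 2 - 1 else k div 2)"
  have idx: "idx < k" using k unfolding idx_def by auto
  have med: "med k (\<lambda>l. f l w) = sort (map (\<lambda>l. f l w) [1..<k+1]) ! idx" for w
    unfolding med_def idx_def Let_def by simp
  show ?thesis unfolding borel_measurable_iff_le
  proof
    fix a
    have "{w \<in> space M. med k (\<lambda>l. f l w) \<le> a}
        = {w \<in> space M. real idx < (\<Sum>l\<in>{1..<k+1}. if f l w \<le> a then 1 else 0)}"
    proof -
      have "med k (\<lambda>l. f l w) \<le> a \<longleftrightarrow> real idx < (\<Sum>l\<in>{1..<k+1}. if f l w \<le> a then 1 else 0)" for w
      proof -
        have "med k (\<lambda>l. f l w) \<le> a \<longleftrightarrow> idx < length (filter (\<lambda>x. x \<le> a) (map (\<lambda>l. f l w) [1..<k+1]))"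
          unfolding med using idx by (intro sort_nth_le_iff) simp
        also have "\<dots> \<longleftrightarrow> real idx < real (length (filter (\<lambda>x. x \<le> a) (map (\<lambda>l. f l w) [1..<k+1])))"
          by simp
        also have "real (length (filter (\<lambda>x. x \<le> a) (map (\<lambda>l. f l w) [1..<k+1])))
            = (\<Sum>l\<leftarrow>[1..<k+1]. if f l w \<le> a then 1 else 0)"
          unfolding length_filter_sum by (simp add: comp_def)
        also have "\<dots> = (\<Sum>l\<in>{1..<k+1}. if f l w \<le> a then 1 else 0)"
          by (metis sum_set_upt_conv_sum_list_nat set_upt)
        finally show ?thesis .
      qed
      then show ?thesis by simp
    qed
    also have "\<dots> \<in> sets M"
    proof -
      have "(\<lambda>w. \<Sum>l\<in>{1..<k+1}. if f l w \<le> a then 1 else 0 :: real) \<in> borel_measurable M"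
      proof (rule borel_measurable_sum)
        fix l assume "l \<in> {1..<k+1}"
        then have fl: "f l \<in> borel_measurable M" using f by auto
        show "(\<lambda>w. if f l w \<le> a then 1 else 0 :: real) \<in> borel_measurable M"
          by (rule measurable_If[OF borel_measurable_const borel_measurable_const borel_measurable_le[OF fl borel_measurable_const]])
      qed
      then show ?thesis by (rule borel_measurable_less[OF borel_measurable_const])
    qed
    finally show "{w \<in> space M. med k (\<lambda>l. f l w) \<le> a} \<in> sets M" .
  qed
qed

lemma mom_measurable:
  assumes k: "1 \<le> k" and x: "\<And>i. i \<in> {1..n} \<Longrightarrow> x i \<in> borel_measurable M"
  shows "(\<lambda>w. mom n k (\<lambda>i. x i w)) \<in> borel_measurable M"
  unfolding mom_def
proof (rule med_measurable[OF k])
  fix l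
  have "(\<lambda>w. \<Sum>i\<in>block n k l. x i w) \<in> borel_measurable M"
    by (rule borel_measurable_sum) (use x in \<open>auto simp: block_def\<close>)
  then show "(\<lambda>w. (\<Sum>i\<in>block n k l. x i w) / real (card (block n k l))) \<in> borel_measurable M"
    by (rule borel_measurable_divide[OF _ borel_measurable_const])
qed

lemma Sstat_measurable:
  assumes k: "1 \<le> k" and x: "\<And>i. i \<in> {1..n} \<Longrightarrow> x i \<in> borel_measurable M"
    and a: "\<And>i j. i \<in> {1..n} \<Longrightarrow> j \<in> {1..<m} \<Longrightarrow> a i j \<in> borel_measurable M"
    and j: "j < m"
  shows "(\<lambda>w. Sstat n k (\<lambda>i. x i w) (\<lambda>i j. a i j w) \<theta> j) \<in> borel_measurable M"
proof (cases "j = 0")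
  case True
  have "(\<lambda>w. mom n k (\<lambda>i. x i w)) \<in> borel_measurable M" by (rule mom_measurable[OF k x])
  then have h: "(\<lambda>w. mom n k (\<lambda>i. x i w) - \<theta>) \<in> borel_measurable M"
    by (rule borel_measurable_diff[OF _ borel_measurable_const])
  have eq: "(\<lambda>w. Sstat n k (\<lambda>i. x i w) (\<lambda>i j. a i j w) \<theta> j) = (\<lambda>w. mom n k (\<lambda>i. x i w) - \<theta>)"
    unfolding Sstat_def Dset_def using True by simp
  show ?thesis unfolding eq by (rule h)
next
  case False
  have jj: "j \<in> {1..<m}" using False j by simp
  have "(\<lambda>w. mom n k (\<lambda>i. a i j w * (x i w - \<theta>) + \<theta>)) \<in> borel_measurable M"
  proof (rule mom_measurable[OF k])
    fix i assume i: "i \<in> {1..n}"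
    have xi: "x i \<in> borel_measurable M" by (rule x[OF i])
    have ai: "a i j \<in> borel_measurable M" by (rule a[OF i jj])
    show "(\<lambda>w. a i j w * (x i w - \<theta>) + \<theta>) \<in> borel_measurable M"
      by (intro borel_measurable_add borel_measurable_times borel_measurable_diff xi ai borel_measurable_const)
  qed
  then have h: "(\<lambda>w. mom n k (\<lambda>i. a i j w * (x i w - \<theta>) + \<theta>) - \<theta>) \<in> borel_measurable M"
    by (rule borel_measurable_diff[OF _ borel_measurable_const])
  have eq: "(\<lambda>w. Sstat n k (\<lambda>i. x i w) (\<lambda>i j. a i j w) \<theta> j) = (\<lambda>w. mom n k (\<lambda>i. a i j w * (x i w - \<theta>) + \<theta>) - \<theta>)"
    unfolding Sstat_def Dset_def using False by simp
  show ?thesis unfolding eq by (rule h)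
qed

lemma set_prec_aux: "{w\<in>A. (f w::real) < g w \<or> (f w = g w \<and> P w)} = {w\<in>A. f w < g w} \<union> ({w\<in>A. f w \<le> g w} \<inter> {w\<in>A. g w \<le> f w}) \<inter> {w\<in>A. P w}"
  by auto

lemma nat_real_le_aux: "(1 + (c::nat) \<le> d) = (1 + real c \<le> real d)"
  by linarith

lemma rank_event_measurable:
  assumes k: "1 \<le> k" and x: "\<And>i. i \<in> {1..n} \<Longrightarrow> x i \<in> borel_measurable M"
    and a: "\<And>i j. i \<in> {1..n} \<Longrightarrow> j \<in> {1..<m} \<Longrightarrow> a i j \<in> borel_measurable M"
    and p: "p \<in> measurable M (count_space UNIV)"
  shows "{w \<in> space M. rank_R n k m (\<lambda>i. x i w) (\<lambda>i j. a i j w) (p w) \<theta> \<le> m - r} \<in> sets M"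
proof -
  let ?S = "\<lambda>w. Sstat n k (\<lambda>i. x i w) (\<lambda>i j. a i j w) \<theta>"
  have P: "(\<lambda>w. if prec_pi (p w) (?S w) 0 j then 1 else 0 :: real) \<in> borel_measurable M"
    if j: "j \<in> {1..<m}" for j
  proof -
    have s0: "(\<lambda>w. ?S w 0) \<in> borel_measurable M" and sj: "(\<lambda>w. ?S w j) \<in> borel_measurable M"
      using Sstat_measurable[where x=x and a=a and n=n and m=m and k=k and \<theta>=\<theta>, OF k x a, of 0] Sstat_measurable[where x=x and a=a and n=n and m=m and k=k and \<theta>=\<theta>, OF k x a, of j] j by simp_all
    have pp: "{w \<in> space M. p w 0 < p w j} \<in> sets M"
    proof -
      have "{w \<in> space M. p w 0 < p w j} = p -` {q. q 0 < q j} \<inter> space M" by blast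
      also have "\<dots> \<in> sets M" by (rule measurable_sets[OF p]) simp
      finally show ?thesis .
    qed
    have "{w \<in> space M. prec_pi (p w) (?S w) 0 j} = {w \<in> space M. ?S w 0 < ?S w j} \<union>
       (({w \<in> space M. ?S w 0 \<le> ?S w j} \<inter> {w \<in> space M. ?S w j \<le> ?S w 0}) \<inter> {w \<in> space M. p w 0 < p w j})"
      unfolding prec_pi_def by (rule set_prec_aux)
    also have "\<dots> \<in> sets M"
      by (rule sets.Un[OF borel_measurable_less[OF s0 sj] sets.Int[OF sets.Int[OF borel_measurable_le[OF s0 sj] borel_measurable_le[OF sj s0]] pp]])
    finally show ?thesis by (rule measurable_If[OF borel_measurable_const borel_measurable_const])
  qed
  have sm: "(\<lambda>w. \<Sum>j\<in>{1..<m}. if prec_pi (p w) (?S w) 0 j then 1 else 0 :: real) \<in> borel_measurable M"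
    by (rule borel_measurable_sum) (rule P)
  have "{w \<in> space M. rank_R n k m (\<lambda>i. x i w) (\<lambda>i j. a i j w) (p w) \<theta> \<le> m - r}
      = {w \<in> space M. 1 + (\<Sum>j\<in>{1..<m}. if prec_pi (p w) (?S w) 0 j then 1 else 0 :: real) \<le> real (m - r)}"
  proof (intro Collect_cong conj_cong refl)
    fix w
    have e: "(\<Sum>j\<in>{1..<m}. if prec_pi (p w) (?S w) 0 j then 1 else 0 :: real)
        = real (card {j \<in> {1..<m}. prec_pi (p w) (?S w) 0 j})" by (rule sum_if_card) simp
    show "(rank_R n k m (\<lambda>i. x i w) (\<lambda>i j. a i j w) (p w) \<theta> \<le> m - r) =
       (1 + (\<Sum>j\<in>{1..<m}. if prec_pi (p w) (?S w) 0 j then 1 else 0 :: real) \<le> real (m - r))"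
      unfolding e rank_R_def by (rule nat_real_le_aux)
  qed
  also have "\<dots> \<in> sets M"
    by (rule borel_measurable_le[OF borel_measurable_add[OF borel_measurable_const sm] borel_measurable_const])
  finally show ?thesis .
qed


lemma rank_R_cong:
  assumes "\<And>i. i \<in> {1..n} \<Longrightarrow> x i = x' i"
    and "\<And>i j. i \<in> {1..n} \<Longrightarrow> j \<in> {1..<m} \<Longrightarrow> a i j = a' i j"
  shows "rank_R n k m x a p \<theta> = rank_R n k m x' a' p \<theta>"
proof -
  have S: "Sstat n k x a \<theta> j = Sstat n k x' a' \<theta> j" if "j < m" for j
  proof (cases "j = 0")
    case True
    then show ?thesis unfolding Sstat_def Dset_def using assms(1)
      by (intro arg_cong2[where f="(-)"] mom_cong) auto
  next
    case False
    then have "j \<in> {1..<m}" using that by simp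
    then show ?thesis unfolding Sstat_def Dset_def using assms False
      by (intro arg_cong2[where f="(-)"] mom_cong) auto
  qed
  have "{j \<in> {1..<m}. prec_pi p (Sstat n k x a \<theta>) 0 j} = {j \<in> {1..<m}. prec_pi p (Sstat n k x' a' \<theta>) 0 j}"
  proof (intro Collect_cong conj_cong refl)
    fix j assume "j \<in> {1..<m}"
    then have "j < m" "0 < m" by auto
    then show "prec_pi p (Sstat n k x a \<theta>) 0 j = prec_pi p (Sstat n k x' a' \<theta>) 0 j"
      unfolding prec_pi_def using S by simp
  qed
  then show ?thesis unfolding rank_R_def by simp
qed

lemma (in prob_space) sum_measure_const:
  assumes I: "finite I" and B: "\<And>i. i \<in> I \<Longrightarrow> B i \<in> sets M"
    and c: "\<And>x. x \<in> space M \<Longrightarrow> (\<Sum>i\<in>I. indicator (B i) x) = (c::real)"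
  shows "(\<Sum>i\<in>I. measure M (B i)) = c"
proof -
  have "(\<Sum>i\<in>I. measure M (B i)) = (\<Sum>i\<in>I. integral\<^sup>L M (indicator (B i)))"
    using B by (intro sum.cong refl) (simp add: emeasure_eq_measure)
  also have "\<dots> = integral\<^sup>L M (\<lambda>x. \<Sum>i\<in>I. indicator (B i) x :: real)"
  proof -
    have "integral\<^sup>L M (\<lambda>x. \<Sum>i\<in>I. indicator (B i) x :: real) = (\<Sum>i\<in>I. integral\<^sup>L M (indicator (B i)))"
    proof (rule Bochner_Integration.integral_sum)
      fix i assume "i \<in> I"
      then show "integrable M (indicator (B i) :: 'a \<Rightarrow> real)"
        using B by (intro integrable_real_indicator) (auto simp: less_top[symmetric])
    qed
    then show ?thesis by simp
  qed
  also have "\<dots> = integral\<^sup>L M (\<lambda>x. c)"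
    using c by (intro Bochner_Integration.integral_cong) auto
  also have "\<dots> = c" by (simp add: prob_space)
  finally show ?thesis .
qed



lemma singleton_PiM_sets:
  assumes "finite I" "a \<in> extensional I"
  shows "{a} \<in> sets (PiM I (\<lambda>_. borel :: real measure))"
proof -
  have "{a} = PiE I (\<lambda>i. {a i})" using assms(2) by (auto simp: PiE_def extensional_def Pi_def fun_eq_iff) (metis)
  also have "\<dots> \<in> sets (PiM I (\<lambda>_. borel :: real measure))"
    using assms(1) by (intro sets_PiM_I_finite) auto
  finally show ?thesis .
qed

lemma meas_eq_const:
  assumes [measurable]: "f \<in> borel_measurable M"
  shows "{w \<in> space M. f w = (c::real)} \<in> sets M"
  by measurable

theorem corollary1:
  fixes M :: "'w measure"
    and X :: "nat \<Rightarrow> 'w \<Rightarrow> real"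
    and \<alpha> :: "nat \<Rightarrow> nat \<Rightarrow> 'w \<Rightarrow> real"
    and \<pi> :: "'w \<Rightarrow> nat \<Rightarrow> nat"
    and \<mu> :: real and n k m r :: nat
  assumes "prob_space M"
    and "1 \<le> k" and "k \<le> n" and "1 \<le> r" and "r \<le> m"
    \<comment> \<open>data: i.i.d., distribution symmetric about mu\<close>
    and "prob_space.indep_vars M (\<lambda>_. borel) X {1..n}"
    and "\<And>i. i \<in> {1..n} \<Longrightarrow> distr M borel (X i) = distr M borel (X 1)"
    and "distr M borel (\<lambda>w. X 1 w - \<mu>) = distr M borel (\<lambda>w. \<mu> - X 1 w)"
    \<comment> \<open>i.i.d. Rademacher signs\<close>
    and "prob_space.indep_vars M (\<lambda>_. borel) (\<lambda>(i, j). \<alpha> i j) ({1..n} \<times> {1..<m})"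
    and "\<And>i j. i \<in> {1..n} \<Longrightarrow> j \<in> {1..<m} \<Longrightarrow>
           measure M {w \<in> space M. \<alpha> i j w = 1} = 1 / 2 \<and>
           measure M {w \<in> space M. \<alpha> i j w = -1} = 1 / 2"
    \<comment> \<open>uniformly random permutation of {0,...,m-1}\<close>
    and "\<And>w. w \<in> space M \<Longrightarrow> \<pi> w permutes {..<m}"
    and "\<And>p. p permutes {..<m} \<Longrightarrow> measure M {w \<in> space M. \<pi> w = p} = 1 / fact m"
    \<comment> \<open>data, signs and permutation mutually independent\<close>
    and "\<pi> \<in> measurable M (count_space UNIV)"
    and "\<And>A B C. A \<in> sets (PiM {1..n} (\<lambda>_. borel)) \<Longrightarrow>
           B \<in> sets (PiM ({1..n} \<times> {1..<m}) (\<lambda>_. borel)) \<Longrightarrow>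
           measure M {w \<in> space M. (\<lambda>i\<in>{1..n}. X i w) \<in> A
               \<and> (\<lambda>ij\<in>{1..n} \<times> {1..<m}. \<alpha> (fst ij) (snd ij) w) \<in> B \<and> \<pi> w \<in> C}
           = measure M {w \<in> space M. (\<lambda>i\<in>{1..n}. X i w) \<in> A}
             * measure M {w \<in> space M. (\<lambda>ij\<in>{1..n} \<times> {1..<m}. \<alpha> (fst ij) (snd ij) w) \<in> B}
             * measure M {w \<in> space M. \<pi> w \<in> C}"
  shows "measure M {w \<in> space M. \<mu> \<in> conf_set n k m r (\<lambda>i. X i w) (\<lambda>i j. \<alpha> i j w) (\<pi> w)}
           = 1 - real r / real m"
proof -
  interpret P: prob_space M by fact
  let ?N = "{1..n}"
  let ?IJ = "{1..n} \<times> {1..<m}"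
  let ?PN = "PiM {1..n} (\<lambda>_. borel) :: (nat \<Rightarrow> real) measure"
  let ?PIJ = "PiM ({1..n} \<times> {1..<m}) (\<lambda>_. borel) :: (nat \<times> nat \<Rightarrow> real) measure"
  let ?Yv = "\<lambda>w. \<lambda>i\<in>{1..n}. X i w"
  let ?Av = "\<lambda>w. \<lambda>ij\<in>{1..n} \<times> {1..<m}. \<alpha> (fst ij) (snd ij) w"
  let ?PM = "{p. p permutes {..<m}}"
  have m1: "1 \<le> m" using assms(4,5) by simp
  have n1: "1 \<le> n" using assms(2,3) by simp
  have Xm: "X i \<in> borel_measurable M" if "i \<in> {1..n}" for i
    using assms(6) that unfolding P.indep_vars_def by auto
  have am: "\<alpha> i j \<in> borel_measurable M" if "i \<in> {1..n}" "j \<in> {1..<m}" for i j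
  proof -
    have "(i, j) \<in> ?IJ" using that by simp
    then have "(\<lambda>(i, j). \<alpha> i j) (i, j) \<in> borel_measurable M"
      using assms(9) unfolding P.indep_vars_def by blast
    then show ?thesis by simp
  qed
  have Yvm: "?Yv \<in> measurable M ?PN" by (rule measurable_restrict) (rule Xm)
  have Avm: "?Av \<in> measurable M ?PIJ" by (rule measurable_restrict) (auto intro: am)
  define E where "E = {w \<in> space M. rank_R n k m (\<lambda>i. X i w) (\<lambda>i j. \<alpha> i j w) (\<pi> w) \<mu> \<le> m - r}"
  have goal_eq: "{w \<in> space M. \<mu> \<in> conf_set n k m r (\<lambda>i. X i w) (\<lambda>i j. \<alpha> i j w) (\<pi> w)} = E"
    unfolding E_def conf_set_def by simp
  have Em: "E \<in> sets M" unfolding E_def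
    by (rule rank_event_measurable[where x=X and a=\<alpha> and p=\<pi>, OF assms(2) Xm am assms(13)])
  define Aset where "Aset a p = {y \<in> space ?PN. rank_R n k m y (\<lambda>i j. a (i, j)) p \<mu> \<le> m - r}" for a p
  have Asetm: "Aset a p \<in> sets ?PN" for a p
  proof -
    have "{y \<in> space ?PN. rank_R n k m (\<lambda>i. y i) (\<lambda>i j. a (i, j)) p \<mu> \<le> m - r} \<in> sets ?PN"
    proof (rule rank_event_measurable[where x="\<lambda>i y. y i" and a="\<lambda>i j y. a (i, j)" and p="\<lambda>y. p", OF assms(2)])
      fix i assume "i \<in> {1..n}"
      then show "(\<lambda>y. y i) \<in> borel_measurable ?PN" by (rule measurable_component_singleton)
    qed auto
    then show ?thesis unfolding Aset_def by simp
  qed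
  have AEsg: "AE w in M. ?Av w \<in> SG n m"
  proof -
    have "AE w in M. \<forall>ij\<in>?IJ. \<alpha> (fst ij) (snd ij) w \<in> {-1, 1}"
    proof (rule AE_finite_allI)
      fix ij assume ij: "ij \<in> ?IJ"
      obtain i j where ij': "ij = (i, j)" by (cases ij)
      have i: "i \<in> {1..n}" and j: "j \<in> {1..<m}" using ij ij' by auto
      have s1: "{w \<in> space M. \<alpha> i j w = -1} \<in> sets M" "{w \<in> space M. \<alpha> i j w = 1} \<in> sets M"
        using meas_eq_const[OF am[OF i j]] by auto
      have eq: "{w \<in> space M. \<alpha> i j w \<in> {-1, 1}} = {w \<in> space M. \<alpha> i j w = -1} \<union> {w \<in> space M. \<alpha> i j w = 1}"
        by auto
      have disj: "{w \<in> space M. \<alpha> i j w = -1} \<inter> {w \<in> space M. \<alpha> i j w = 1} = {}" by auto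
      have "P.prob {w \<in> space M. \<alpha> i j w \<in> {-1, 1}} = P.prob {w \<in> space M. \<alpha> i j w = -1} + P.prob {w \<in> space M. \<alpha> i j w = 1}"
        unfolding eq by (rule P.finite_measure_Union[OF s1 disj])
      also have "\<dots> = 1" using assms(10)[OF i j] by simp
      finally have "AE w in M. w \<in> {w \<in> space M. \<alpha> i j w \<in> {-1, 1}}" by (rule P.AE_prob_1)
      then show "AE w in M. \<alpha> (fst ij) (snd ij) w \<in> {-1, 1}" using ij' by (auto elim: AE_mp)
    qed simp
    then show ?thesis
      by eventually_elim (auto simp add: SG_def restrict_PiE_iff Pi_def)
  qed
  have Aprob: "measure M {w \<in> space M. ?Av w \<in> {a}} = (1/2) ^ (n * (m - 1))" if a: "a \<in> SG n m" for a
  proof (cases "m = 1")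
    case True
    then have "{w \<in> space M. ?Av w \<in> {a}} = space M" using a by (auto simp: SG_def)
    then show ?thesis using True by (simp add: P.prob_space)
  next
    case False
    then have ne: "?IJ \<noteq> {}" using m1 n1 by auto
    have "{w \<in> space M. ?Av w \<in> {a}} = (\<Inter>ij\<in>?IJ. (\<lambda>(i, j). \<alpha> i j) ij -` {a ij} \<inter> space M)"
    proof (intro set_eqI iffI)
      fix w assume "w \<in> {w \<in> space M. ?Av w \<in> {a}}"
      then show "w \<in> (\<Inter>ij\<in>?IJ. (\<lambda>(i, j). \<alpha> i j) ij -` {a ij} \<inter> space M)"
        using ne by (auto simp: fun_eq_iff split: if_splits)
    next
      fix w assume w: "w \<in> (\<Inter>ij\<in>?IJ. (\<lambda>(i, j). \<alpha> i j) ij -` {a ij} \<inter> space M)"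
      then have "w \<in> space M" using ne by auto
      moreover have "?Av w = a"
      proof (rule PiE_ext[of _ ?IJ "\<lambda>_. UNIV"])
        show "?Av w \<in> ?IJ \<rightarrow>\<^sub>E UNIV" by auto
        show "a \<in> ?IJ \<rightarrow>\<^sub>E UNIV" using a by (auto simp: SG_def)
        fix ij assume "ij \<in> ?IJ" then show "?Av w ij = a ij" using w by (cases ij) auto
      qed
      ultimately show "w \<in> {w \<in> space M. ?Av w \<in> {a}}" by simp
    qed
    also have "P.prob \<dots> = (\<Prod>ij\<in>?IJ. P.prob ((\<lambda>(i, j). \<alpha> i j) ij -` {a ij} \<inter> space M))"
      by (rule P.indep_varsD_finite[OF assms(9) ne]) auto
    also have "\<dots> = (\<Prod>ij\<in>?IJ. 1/2)"
    proof (rule prod.cong[OF refl])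
      fix ij assume ij: "ij \<in> ?IJ"
      obtain i j where ij': "ij = (i, j)" by (cases ij)
      have i: "i \<in> {1..n}" and j: "j \<in> {1..<m}" using ij ij' by auto
      have "a ij \<in> {-1, 1}" using a ij by (auto simp: SG_def)
      moreover have "(\<lambda>(i, j). \<alpha> i j) ij -` {a ij} \<inter> space M = {w \<in> space M. \<alpha> i j w = a ij}"
        using ij' by auto
      ultimately show "P.prob ((\<lambda>(i, j). \<alpha> i j) ij -` {a ij} \<inter> space M) = 1/2"
        using assms(10)[OF i j] by auto
    qed
    also have "\<dots> = (1/2) ^ (n * (m - 1))" by (simp add: card_cartesian_product)
    finally show ?thesis .
  qed
  define Ep where "Ep x = {w \<in> space M. ?Yv w \<in> Aset (fst x) (snd x) \<and> ?Av w \<in> {fst x} \<and> \<pi> w \<in> {snd x}}" for x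
  have finSP: "finite (SG n m \<times> ?PM)" using finite_SG finite_permutations by blast
  have sing: "{fst x} \<in> sets ?PIJ" if "x \<in> SG n m \<times> ?PM" for x
  proof -
    have "fst x \<in> extensional ?IJ" using that by (auto simp: SG_def PiE_def)
    then show ?thesis by (intro singleton_PiM_sets) auto
  qed
  have Epm: "Ep x \<in> sets M" if x: "x \<in> SG n m \<times> ?PM" for x
  proof -
    have "Ep x = (?Yv -` Aset (fst x) (snd x) \<inter> space M) \<inter> (?Av -` {fst x} \<inter> space M) \<inter> (\<pi> -` {snd x} \<inter> space M)"
      unfolding Ep_def by auto
    also have "\<dots> \<in> sets M"
      by (rule sets.Int[OF sets.Int[OF measurable_sets[OF Yvm Asetm] measurable_sets[OF Avm sing[OF x]]] measurable_sets[OF assms(13)]]) simp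
    finally show ?thesis .
  qed
  have E_union: "P.prob E = P.prob (\<Union>x\<in>SG n m \<times> ?PM. Ep x)"
  proof (rule P.finite_measure_eq_AE)
    show "AE w in M. (w \<in> E) = (w \<in> (\<Union>x\<in>SG n m \<times> ?PM. Ep x))"
      using AEsg AE_space
    proof eventually_elim
      fix w assume sg: "?Av w \<in> SG n m" and w: "w \<in> space M"
      have pw: "\<pi> w \<in> ?PM" using assms(11)[OF w] by simp
      have Ysp: "?Yv w \<in> space ?PN" by (simp add: space_PiM)
      have rk: "rank_R n k m (\<lambda>i. X i w) (\<lambda>i j. \<alpha> i j w) (\<pi> w) \<mu> = rank_R n k m (?Yv w) (\<lambda>i j. ?Av w (i, j)) (\<pi> w) \<mu>"
        by (rule rank_R_cong) auto
      show "(w \<in> E) = (w \<in> (\<Union>x\<in>SG n m \<times> ?PM. Ep x))"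
      proof
        assume "w \<in> E"
        then have "w \<in> Ep (?Av w, \<pi> w)" using w Ysp rk unfolding E_def Ep_def Aset_def by simp
        then show "w \<in> (\<Union>x\<in>SG n m \<times> ?PM. Ep x)" using sg pw by blast
      next
        assume "w \<in> (\<Union>x\<in>SG n m \<times> ?PM. Ep x)"
        then obtain x where "x \<in> SG n m \<times> ?PM" "w \<in> Ep x" by blast
        then have "?Yv w \<in> Aset (?Av w) (\<pi> w)" unfolding Ep_def by auto
        then show "w \<in> E" using w rk unfolding E_def Aset_def by simp
      qed
    qed
    show "E \<in> sets M" by (rule Em)
    show "(\<Union>x\<in>SG n m \<times> ?PM. Ep x) \<in> sets M" using Epm finSP by (intro sets.finite_UN) auto
  qed
  also have "\<dots> = (\<Sum>x\<in>SG n m \<times> ?PM. P.prob (Ep x))"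
    by (rule P.finite_measure_finite_Union[OF finSP]) (use Epm in \<open>auto simp: disjoint_family_on_def Ep_def\<close>)
  finally have E_sum: "P.prob E = (\<Sum>x\<in>SG n m \<times> ?PM. P.prob (Ep x))" .
  define PY where "PY = distr M ?PN ?Yv"
  have PYsp: "space PY = space ?PN" unfolding PY_def by simp
  have PYsets: "sets PY = sets ?PN" unfolding PY_def by simp
  interpret Q: prob_space PY unfolding PY_def by (rule P.prob_space_distr[OF Yvm])
  have Ep_prob: "P.prob (Ep x) = Q.prob (Aset (fst x) (snd x)) * ((1/2) ^ (n * (m - 1)) * (1 / fact m))"
    if x: "x \<in> SG n m \<times> ?PM" for x
  proof -
    have a: "fst x \<in> SG n m" and p: "snd x permutes {..<m}" using x by auto
    have "P.prob (Ep x) = P.prob {w \<in> space M. ?Yv w \<in> Aset (fst x) (snd x)} * P.prob {w \<in> space M. ?Av w \<in> {fst x}} * P.prob {w \<in> space M. \<pi> w \<in> {snd x}}"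
      unfolding Ep_def by (rule assms(14)[OF Asetm sing[OF x]])
    also have "P.prob {w \<in> space M. ?Yv w \<in> Aset (fst x) (snd x)} = Q.prob (Aset (fst x) (snd x))"
    proof -
      have "{w \<in> space M. ?Yv w \<in> Aset (fst x) (snd x)} = ?Yv -` Aset (fst x) (snd x) \<inter> space M" by auto
      then show ?thesis unfolding PY_def using measure_distr[OF Yvm Asetm] by simp
    qed
    also have "P.prob {w \<in> space M. ?Av w \<in> {fst x}} = (1/2) ^ (n * (m - 1))" by (rule Aprob[OF a])
    also have "P.prob {w \<in> space M. \<pi> w \<in> {snd x}} = 1 / fact m" using assms(12)[OF p] by simp
    finally show ?thesis by simp
  qed
  have X1: "X 1 \<in> borel_measurable M" using Xm n1 by simp
  have D1sym: "distr (distr M borel (X 1)) borel (\<lambda>t. 2 * \<mu> - t) = distr M borel (X 1)"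
  proof -
    have h1: "(\<lambda>w. X 1 w - \<mu>) \<in> borel_measurable M" by (rule borel_measurable_diff[OF X1 borel_measurable_const])
    have h2: "(\<lambda>w. \<mu> - X 1 w) \<in> borel_measurable M" by (rule borel_measurable_diff[OF borel_measurable_const X1])
    have sh: "(\<lambda>t::real. t + \<mu>) \<in> borel_measurable borel"
      by (rule borel_measurable_add[OF measurable_ident_sets[OF refl] borel_measurable_const])
    have rf: "(\<lambda>t::real. 2 * \<mu> - t) \<in> borel_measurable borel"
      by (rule borel_measurable_diff[OF borel_measurable_const measurable_ident_sets[OF refl]])
    have "distr M borel (X 1) = distr (distr M borel (\<lambda>w. X 1 w - \<mu>)) borel (\<lambda>t. t + \<mu>)"
      by (subst distr_distr[OF sh h1]) (simp add: comp_def)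
    also have "\<dots> = distr (distr M borel (\<lambda>w. \<mu> - X 1 w)) borel (\<lambda>t. t + \<mu>)" by (simp only: assms(8))
    also have "\<dots> = distr M borel ((\<lambda>t. 2 * \<mu> - t) \<circ> X 1)"
    proof -
      have "(\<lambda>t. t + \<mu>) \<circ> (\<lambda>w. \<mu> - X 1 w) = (\<lambda>t. 2 * \<mu> - t) \<circ> X 1" by (auto simp: fun_eq_iff)
      then show ?thesis by (subst distr_distr[OF sh h2]) simp
    qed
    also have "\<dots> = distr (distr M borel (X 1)) borel (\<lambda>t. 2 * \<mu> - t)"
      by (rule distr_distr[OF rf X1, symmetric])
    finally show ?thesis by simp
  qed
  have PY_eq: "PY = PiM ?N (\<lambda>i. distr M borel (X 1))"
  proof -
    have "PY = PiM ?N (\<lambda>i. distr M borel (X i))" unfolding PY_def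
      by (rule P.indep_vars_iff_distr_eq_PiM'[THEN iffD1]) (use n1 Xm assms(6) in auto)
    also have "\<dots> = PiM ?N (\<lambda>i. distr M borel (X 1))" by (rule PiM_cong[OF refl]) (rule assms(7))
    finally show ?thesis .
  qed
  have flm: "fl n \<mu> s \<in> measurable ?PN ?PN" for s
    unfolding fl_def
  proof (rule measurable_restrict)
    fix i assume i: "i \<in> {1..n}"
    have ci: "(\<lambda>y::nat\<Rightarrow>real. y i) \<in> borel_measurable ?PN" by (rule measurable_component_singleton[OF i])
    show "(\<lambda>y. \<mu> + s i * (y i - \<mu>)) \<in> borel_measurable ?PN"
      by (rule borel_measurable_add[OF borel_measurable_const borel_measurable_times[OF borel_measurable_const borel_measurable_diff[OF ci borel_measurable_const]]])
  qed
  have flip: "distr PY ?PN (fl n \<mu> s) = PY" if s: "s \<in> SN n" for s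
  proof -
    let ?g = "\<lambda>i t. \<mu> + s i * (t - \<mu>)"
    have gm: "?g i \<in> borel_measurable borel" for i
      by (rule borel_measurable_add[OF borel_measurable_const borel_measurable_times[OF borel_measurable_const borel_measurable_diff[OF measurable_ident_sets[OF refl] borel_measurable_const]]])
    have ind': "P.indep_vars (\<lambda>_. borel) (\<lambda>i w. ?g i (X i w)) ?N"
      by (rule P.indep_vars_compose2[OF assms(6)]) (rule gm)
    have Xm': "(\<lambda>w. ?g i (X i w)) \<in> borel_measurable M" if "i \<in> ?N" for i
      using measurable_comp[OF Xm[OF that] gm] by (simp add: comp_def)
    have "distr M ?PN (\<lambda>w. \<lambda>i\<in>?N. ?g i (X i w)) = PiM ?N (\<lambda>i. distr M borel (\<lambda>w. ?g i (X i w)))"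
      by (rule P.indep_vars_iff_distr_eq_PiM'[THEN iffD1]) (use n1 Xm' ind' in auto)
    also have "\<dots> = PiM ?N (\<lambda>i. distr M borel (X 1))"
    proof (rule PiM_cong[OF refl])
      fix i assume i: "i \<in> ?N"
      have si: "s i = 1 \<or> s i = -1" using s i by (auto simp: SN_def)
      have "distr M borel (\<lambda>w. ?g i (X i w)) = distr (distr M borel (X i)) borel (?g i)"
        by (subst distr_distr[OF gm Xm[OF i]]) (simp add: comp_def)
      also have "\<dots> = distr (distr M borel (X 1)) borel (?g i)" using assms(7)[OF i] by simp
      also have "\<dots> = distr M borel (X 1)"
      proof (cases "s i = 1")
        case True
        then have "?g i = (\<lambda>t. t)" by auto
        then show ?thesis by (simp add: distr_id2)
      next
        case False
        then have "s i = -1" using si by simp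
        then have "?g i = (\<lambda>t. 2 * \<mu> - t)" by (auto simp: fun_eq_iff algebra_simps)
        then show ?thesis using D1sym by simp
      qed
      finally show "distr M borel (\<lambda>w. ?g i (X i w)) = distr M borel (X 1)" .
    qed
    also have "\<dots> = PY" using PY_eq by simp
    finally have A: "distr M ?PN (\<lambda>w. \<lambda>i\<in>?N. ?g i (X i w)) = PY" .
    have "distr PY ?PN (fl n \<mu> s) = distr M ?PN (fl n \<mu> s \<circ> ?Yv)" unfolding PY_def by (rule distr_distr[OF flm Yvm])
    also have "fl n \<mu> s \<circ> ?Yv = (\<lambda>w. \<lambda>i\<in>?N. ?g i (X i w))" by (auto simp: fl_def fun_eq_iff)
    finally have F: "distr PY ?PN (fl n \<mu> s) = distr M ?PN (\<lambda>w. \<lambda>i\<in>?N. ?g i (X i w))" .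
    show ?thesis using F A by (rule trans)
  qed
  have Qflip: "Q.prob A = Q.prob (fl n \<mu> s -` A \<inter> space ?PN)" if "s \<in> SN n" "A \<in> sets ?PN" for s A
  proof -
    have flm': "fl n \<mu> s \<in> measurable PY ?PN" unfolding measurable_cong_sets[OF PYsets refl] by (rule flm)
    have "Q.prob A = measure (distr PY ?PN (fl n \<mu> s)) A" using flip[OF that(1)] by simp
    also have "\<dots> = Q.prob (fl n \<mu> s -` A \<inter> space PY)" by (rule measure_distr[OF flm' that(2)])
    finally show ?thesis using PYsp by simp
  qed
  define Cnt where "Cnt = real (m - r) * 2 ^ (n * m) * fact m / m"
  let ?T = "SN n \<times> (SG n m \<times> ?PM)"
  have finT: "finite ?T" using finite_SN finite_SG finite_permutations by blast
  let ?B = "\<lambda>t. fl n \<mu> (fst t) -` Aset (fst (snd t)) (snd (snd t)) \<inter> space ?PN"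
  have sumB: "(\<Sum>t\<in>?T. Q.prob (?B t)) = Cnt"
  proof (rule Q.sum_measure_const[OF finT])
    fix t assume "t \<in> ?T"
    show "?B t \<in> sets PY" unfolding PYsets by (rule measurable_sets[OF flm Asetm])
  next
    fix y assume y: "y \<in> space PY"
    have fsp: "fl n \<mu> s y \<in> space ?PN" for s by (simp add: fl_def space_PiM)
    have ind: "indicator (?B t) y = (if rank_R n k m (fl n \<mu> (fst t) y) (\<lambda>i j. fst (snd t) (i, j)) (snd (snd t)) \<mu> \<le> m - r then 1 else (0::real))" for t
      using y fsp PYsp unfolding Aset_def by (auto simp: indicator_def)
    have "(\<Sum>t\<in>?T. indicator (?B t) y) = (\<Sum>s\<in>SN n. \<Sum>a\<in>SG n m. \<Sum>p\<in>?PM. if rank_R n k m (fl n \<mu> s y) (\<lambda>i j. a (i, j)) p \<mu> \<le> m - r then 1 else (0::real))"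
      unfolding ind by (simp only: sum.cartesian_product' fst_conv snd_conv)
    also have "\<dots> = Cnt"
    proof -
      have "real m * (\<Sum>s\<in>SN n. \<Sum>a\<in>SG n m. \<Sum>p\<in>?PM. if rank_R n k m (fl n \<mu> s y) (\<lambda>i j. a (i, j)) p \<mu> \<le> m - r then 1 else (0::real))
          = real (m - r) * 2 ^ (n * m) * real (fact m)" by (rule count_total[OF assms(5) m1])
      then show ?thesis unfolding Cnt_def using m1 by (simp add: field_simps)
    qed
    finally show "(\<Sum>t\<in>?T. indicator (?B t) y) = Cnt" .
  qed
  have "(\<Sum>t\<in>?T. Q.prob (?B t)) = (\<Sum>s\<in>SN n. \<Sum>x\<in>SG n m \<times> ?PM. Q.prob (?B (s, x)))"
    by (rule sum.cartesian_product')
  also have "\<dots> = (\<Sum>s\<in>SN n. \<Sum>x\<in>SG n m \<times> ?PM. Q.prob (Aset (fst x) (snd x)))"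
  proof (intro sum.cong refl)
    fix s x assume s: "s \<in> SN n"
    show "Q.prob (?B (s, x)) = Q.prob (Aset (fst x) (snd x))" using Qflip[OF s Asetm] by simp
  qed
  also have "\<dots> = 2 ^ n * (\<Sum>x\<in>SG n m \<times> ?PM. Q.prob (Aset (fst x) (snd x)))"
    by (simp add: SN_def card_PiE)
  finally have S: "(\<Sum>x\<in>SG n m \<times> ?PM. Q.prob (Aset (fst x) (snd x))) = Cnt / 2 ^ n"
    using sumB by (simp add: field_simps)
  have "P.prob E = (\<Sum>x\<in>SG n m \<times> ?PM. Q.prob (Aset (fst x) (snd x)) * ((1/2) ^ (n * (m - 1)) * (1 / fact m)))"
    unfolding E_sum by (intro sum.cong refl) (rule Ep_prob)
  also have "\<dots> = Cnt / 2 ^ n * ((1/2) ^ (n * (m - 1)) * (1 / fact m))"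
    by (simp only: sum_distrib_right[symmetric] S)
  also have "\<dots> = 1 - real r / real m"
  proof -
    have nm: "n * m = n + n * (m - 1)" using m1 by (cases m) auto
    have p2: "(2::real) ^ (n * m) = 2 ^ n * 2 ^ (n * (m - 1))" unfolding nm by (rule power_add)
    have "Cnt / 2 ^ n * ((1/2) ^ (n * (m - 1)) * (1 / fact m)) = real (m - r) / real m"
      unfolding Cnt_def p2 by (simp add: field_simps power_one_over)
    also have "\<dots> = 1 - real r / real m" using assms(5) m1 by (simp add: field_simps of_nat_diff)
    finally show ?thesis .
  qed
  finally show ?thesis using goal_eq by simp
qed




end
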